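(* Let $a,b\in\mathbb{R}^+\cup\{\infty\}$, $n\ge1$, and $\Lambda:=(-a,b)\times\mathbb{R}^n\times\mathbb{R}$ with points written $(U,X,V)$. Assume: (1) For $\varepsilon\in(0,1]$, $t_\varepsilon:\Lambda\to\Lambda$, $t_\varepsilon(U,X,V)=(U,\,x_\varepsilon(U,X),\,V+g_\varepsilon(U,X)+h_\varepsilon(U,X))$ with $x_\varepsilon\in C^\infty((-a,b)\times\mathbb{R}^n,\mathbb{R}^n)$ and $g_\varepsilon,h_\varepsilon\in C^\infty((-a,b)\times\mathbb{R}^n,\mathbb{R})$; $(t_\varepsilon)_\varepsilon$ has property (E); and $(h_\varepsilon)_\varepsilon$ is uniformly bounded on compact subsets of $(-a,b)\times\mathbb{R}^n$ (for small $\varepsilon$). (2) $s_\varepsilon:\Lambda\to\Lambda$, $s_\varepsilon(U,X,V)=(U,\,x_\varepsilon(U,X),\,V+g_\varepsilon(U,X))$, and $(s_\varepsilon)_\varepsilon$ has property (E). (3) $s:\Lambda\to\Lambda$, $s(U,X,V)=(U,\,x(U,X),\,V+g(U,X))$ with $x\in C((-a,b)\times\mathbb{R}^n,\mathbb{R}^n)$, $g\in C((-a,b)\times\mathbb{R}^n,\mathbb{R})$, and there is an open set $W\subseteq(-a,b)\times\mathbb{R}^n$ containing $(-a,0]\times\mathbb{R}^n$ such that $\hat s:=(U,x):(-a,b)\times\mathbb{R}^n\to(-a,b)\times\mathbb{R}^n$ is injective on $W$. (4) $s_\varepsilon\to s$ as $\varepsilon\to0$ uniformly on compact subsets of $\Lambda$.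 Then for every point $p\in\Lambda$ with $U$-coordinate $0$ there exist an open neighbourhood $P$ of $p$ with $P\subseteq W\times\mathbb{R}$, an open neighbourhood $Q$ of $q:=s(p)$ with $Q\subseteq s(W\times\mathbb{R})$, and $\varepsilon_0\in(0,1]$ such that $\overline Q\subseteq t_\varepsilon(P)$ for all $\varepsilon\le\varepsilon_0$.
   Context: Property (E): a net $(u_\varepsilon)_\varepsilon$ of smooth maps $(-a,b)\times\mathbb{R}^n\times\mathbb{R}\to(-a,b)\times\mathbb{R}^n\times\mathbb{R}$ has property (E) if for every compact $K\subseteq\mathbb{R}^n$ there exist $\alpha\in(0,b)$ and $\varepsilon_0\in(0,1]$ such that $u_\varepsilon$ is injective on $(-a,\alpha]\times K\times\mathbb{R}$ for all $\varepsilon\le\varepsilon_0$. *)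

theory Defs
  imports "HOL-Analysis.Analysis" "HOL-Library.Extended_Real"
begin

text \<open>Iterated partial derivatives along a list of directions, on a set S.
  has_iter_partial S f ds g: g is obtained from f by successively
  differentiating along the directions in ds (the last one applied first is the
  innermost, i.e. the head of the list is the last derivative taken).\<close>
inductive has_iter_partial ::
  "'a::euclidean_space set \<Rightarrow> ('a \<Rightarrow> 'b::real_normed_vector) \<Rightarrow> 'a list \<Rightarrow> ('a \<Rightarrow> 'b) \<Rightarrow> bool"
  for S f where
  nil: "has_iter_partial S f [] f"
| cons: "has_iter_partial S f ds h \<Longrightarrow>
         (\<forall>x\<in>S. ((\<lambda>t. h (x + t *\<^sub>R d)) has_vector_derivative g x) (at 0)) \<Longrightarrow>
         has_iter_partial S f (d # ds) g"

definition smooth_on :: "'a::euclidean_space set \<Rightarrow> ('a \<Rightarrow> 'b::real_normed_vector) \<Rightarrow> bool" where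
  "smooth_on S f \<longleftrightarrow>
     (\<forall>ds. set ds \<subseteq> Basis \<longrightarrow> (\<exists>g. has_iter_partial S f ds g \<and> continuous_on S g))"

definition strip :: "ereal \<Rightarrow> ereal \<Rightarrow> (real \<times> 'x) set" where
  "strip a b = {(U, X). - a < ereal U \<and> ereal U < b}"

definition Lam :: "ereal \<Rightarrow> ereal \<Rightarrow> (real \<times> 'x \<times> real) set" where
  "Lam a b = {(U, X, V). - a < ereal U \<and> ereal U < b}"

definition propE :: "ereal \<Rightarrow> ereal \<Rightarrow> (real \<Rightarrow> real \<times> 'x::topological_space \<times> real \<Rightarrow> real \<times> 'x \<times> real) \<Rightarrow> bool" where
  "propE a b u \<longleftrightarrow>
     (\<forall>K. compact K \<longrightarrow>
        (\<exists>\<alpha> \<epsilon>0. 0 < \<alpha> \<and> ereal \<alpha> < b \<and> 0 < \<epsilon>0 \<and> \<epsilon>0 \<le> 1 \<and>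
           (\<forall>\<epsilon>. 0 < \<epsilon> \<and> \<epsilon> \<le> \<epsilon>0 \<longrightarrow>
              inj_on (u \<epsilon>) {(U, X, V). - a < ereal U \<and> U \<le> \<alpha> \<and> X \<in> K})))"

end

theory Submission
  imports Defs
begin

theorem theorem8p2:
  fixes a b :: ereal
    and xe :: "real \<Rightarrow> real \<times> (real^'n) \<Rightarrow> (real^'n)"
    and ge he :: "real \<Rightarrow> real \<times> (real^'n) \<Rightarrow> real"
    and x :: "real \<times> (real^'n) \<Rightarrow> (real^'n)"
    and g :: "real \<times> (real^'n) \<Rightarrow> real"
    and W :: "(real \<times> (real^'n)) set"
    and t se :: "real \<Rightarrow> real \<times> (real^'n) \<times> real \<Rightarrow> real \<times> (real^'n) \<times> real"
    and s :: "real \<times> (real^'n) \<times> real \<Rightarrow> real \<times> (real^'n) \<times> real"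
  assumes a_pos: "0 < a" and b_pos: "0 < b"
    and t_def: "\<And>\<epsilon>. t \<epsilon> = (\<lambda>(U, X, V). (U, xe \<epsilon> (U, X), V + ge \<epsilon> (U, X) + he \<epsilon> (U, X)))"
    and xe_smooth: "\<And>\<epsilon>. 0 < \<epsilon> \<Longrightarrow> \<epsilon> \<le> 1 \<Longrightarrow> smooth_on (strip a b) (xe \<epsilon>)"
    and ge_smooth: "\<And>\<epsilon>. 0 < \<epsilon> \<Longrightarrow> \<epsilon> \<le> 1 \<Longrightarrow> smooth_on (strip a b) (ge \<epsilon>)"
    and he_smooth: "\<And>\<epsilon>. 0 < \<epsilon> \<Longrightarrow> \<epsilon> \<le> 1 \<Longrightarrow> smooth_on (strip a b) (he \<epsilon>)"
    and t_E: "propE a b t"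
    and he_bdd: "\<And>K. compact K \<Longrightarrow> K \<subseteq> strip a b \<Longrightarrow>
                   \<exists>C \<epsilon>0. 0 < \<epsilon>0 \<and> (\<forall>\<epsilon>. 0 < \<epsilon> \<and> \<epsilon> \<le> \<epsilon>0 \<longrightarrow> (\<forall>y\<in>K. \<bar>he \<epsilon> y\<bar> \<le> C))"
    and se_def: "\<And>\<epsilon>. se \<epsilon> = (\<lambda>(U, X, V). (U, xe \<epsilon> (U, X), V + ge \<epsilon> (U, X)))"
    and se_E: "propE a b se"
    and s_def: "s = (\<lambda>(U, X, V). (U, x (U, X), V + g (U, X)))"
    and x_cont: "continuous_on (strip a b) x"
    and g_cont: "continuous_on (strip a b) g"
    and W_open: "open W" and W_sub: "W \<subseteq> strip a b"
    and W_contains: "{(U, X). - a < ereal U \<and> U \<le> 0} \<subseteq> W"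
    and s_hat_inj: "inj_on (\<lambda>(U, X). (U, x (U, X))) W"
    and conv: "\<And>K. compact K \<Longrightarrow> K \<subseteq> Lam a b \<Longrightarrow> uniform_limit K se s (at_right 0)"
  shows "\<forall>p \<in> Lam a b. fst p = 0 \<longrightarrow>
           (\<exists>P Q \<epsilon>0. open P \<and> p \<in> P \<and> P \<subseteq> {(U, X, V). (U, X) \<in> W} \<and>
                    open Q \<and> s p \<in> Q \<and> Q \<subseteq> s ` {(U, X, V). (U, X) \<in> W} \<and>
                    0 < \<epsilon>0 \<and> \<epsilon>0 \<le> 1 \<and>
                    (\<forall>\<epsilon>. 0 < \<epsilon> \<and> \<epsilon> \<le> \<epsilon>0 \<longrightarrow> closure Q \<subseteq> t \<epsilon> ` P))"
proof (intro ballI impI)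
  fix p :: "real \<times> (real^'n) \<times> real"
  assume pL: "p \<in> Lam a b" and p0: "fst p = 0"
  obtain X0 V0 where p: "p = (0, X0, V0)" using p0 by (cases p) auto
  define w0 where "w0 = (0::real, X0)"
  have "- a < ereal 0" using a_pos by (cases a) (auto simp: zero_ereal_def)
  hence w0W: "w0 \<in> W" using W_contains unfolding w0_def by auto
  obtain \<delta> where dpos: "\<delta> > 0" and dW: "cball w0 \<delta> \<subseteq> W"
    using W_open w0W open_contains_cball by blast
  define sh where "sh = (\<lambda>(U::real, X::real^'n). (U, x (U, X)))"
  have sh_cont: "continuous_on W sh"
  proof -
    have "continuous_on W x" using x_cont W_sub continuous_on_subset by blast
    thus ?thesis unfolding sh_def split_def
      by (intro continuous_intros) (auto simp: case_prod_unfold)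
  qed
  have sh_inj: "inj_on sh W" using s_hat_inj unfolding sh_def .
  have shc: "continuous_on (cball w0 \<delta>) sh" using sh_cont dW continuous_on_subset by blast
  have shi: "inj_on sh (cball w0 \<delta>)" using sh_inj dW inj_on_subset by blast
  have "open (sh ` ball w0 \<delta>)"
    by (rule invariance_of_domain_ball[OF shc dpos shi])
  moreover have "sh w0 \<in> sh ` ball w0 \<delta>" using dpos by auto
  ultimately obtain r where rpos: "r > 0" and rb: "cball (sh w0) r \<subseteq> sh ` ball w0 \<delta>"
    using open_contains_cball by blast
  have rB: "cball (sh w0) r \<subseteq> sh ` cball w0 \<delta>" using rb by auto
  define h where "h = the_inv_into (cball w0 \<delta>) sh"
  have h_cont: "continuous_on (sh ` cball w0 \<delta>) h"
    unfolding h_def by (rule continuous_on_inv_into[OF shc compact_cball shi])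
  have h_in: "h z \<in> cball w0 \<delta>" and sh_h: "sh (h z) = z" if "z \<in> sh ` cball w0 \<delta>" for z
    using that shi unfolding h_def
    by (auto simp: the_inv_into_f_f the_inv_into_into)
  define K where "K = (\<lambda>(U::real, X::real^'n). (U, X, 0::real)) ` cball w0 \<delta>"
  have Kc: "compact K" unfolding K_def
    by (intro compact_continuous_image compact_cball) (auto simp: case_prod_unfold intro!: continuous_intros)
  have KL: "K \<subseteq> Lam a b" using dW W_sub unfolding K_def Lam_def strip_def by auto
  have "\<forall>\<^sub>F \<epsilon> in at_right 0. \<forall>k\<in>K. dist (se \<epsilon> k) (s k) < r/2"
  proof -
    have "r/2 > 0" using rpos by simp
    thus ?thesis using conv[OF Kc KL] unfolding uniform_limit_iff by blast
  qed
  then obtain e where epos: "e > 0" and eK: "\<And>\<epsilon> k. 0 < \<epsilon> \<Longrightarrow> \<epsilon> < e \<Longrightarrow> k \<in> K \<Longrightarrow> dist (se \<epsilon> k) (s k) < r/2"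
    unfolding eventually_at_right_field by auto
  define e0 where "e0 = min (e/2) 1"
  have e0: "0 < e0" "e0 \<le> 1" "e0 < e" using epos unfolding e0_def by auto
  define she where "she = (\<lambda>\<epsilon> (U::real, X::real^'n). (U, xe \<epsilon> (U, X)))"
  have close: "dist (she \<epsilon> w) (sh w) < r/2" if "0 < \<epsilon>" "\<epsilon> < e" "w \<in> cball w0 \<delta>" for \<epsilon> w
  proof -
    obtain U X where w: "w = (U, X)" by (cases w)
    have "(U, X, 0) \<in> K" using that w unfolding K_def by force
    hence d: "dist (se \<epsilon> (U, X, 0)) (s (U, X, 0)) < r/2" using eK that by blast
    have "dist (she \<epsilon> w) (sh w) = dist (xe \<epsilon> (U, X)) (x (U, X))"
      unfolding she_def sh_def w by (simp add: dist_Pair_Pair)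
    also have "\<dots> \<le> dist (xe \<epsilon> (U, X), ge \<epsilon> (U, X)) (x (U, X), g (U, X))"
      by (simp add: dist_Pair_Pair real_sqrt_sum_squares_ge1)
    also have "\<dots> \<le> dist (se \<epsilon> (U, X, 0)) (s (U, X, 0))"
      unfolding se_def s_def by (simp add: dist_Pair_Pair)
    finally show ?thesis using d by linarith
  qed
  have she_cont: "continuous_on (cball w0 \<delta>) (she \<epsilon>)" if epsA: "0 < \<epsilon>" "\<epsilon> \<le> 1" for \<epsilon>
  proof -
    have e: "set ([]::(real \<times> real^'n) list) \<subseteq> Basis" by simp
    obtain gg where "has_iter_partial (strip a b) (xe \<epsilon>) [] gg" "continuous_on (strip a b) gg"
      using spec[OF xe_smooth[OF epsA, unfolded smooth_on_def], of "[]"] by auto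
    hence "continuous_on (strip a b) (xe \<epsilon>)"
      by (auto elim: has_iter_partial.cases)
    hence "continuous_on (cball w0 \<delta>) (xe \<epsilon>)"
      using dW W_sub continuous_on_subset by blast
    thus ?thesis unfolding she_def by (auto simp: case_prod_unfold intro!: continuous_intros)
  qed
  have surj: "\<exists>w\<in>cball w0 \<delta>. she \<epsilon> w = y"
    if eps: "0 < \<epsilon>" "\<epsilon> \<le> e0" and y: "y \<in> cball (sh w0) (r/2)" for \<epsilon> y
  proof -
    define \<phi> where "\<phi> = (\<lambda>z. z - she \<epsilon> (h z) + y)"
    have hc: "continuous_on (cball (sh w0) r) h" using h_cont rB continuous_on_subset by blast
    have sub: "h ` cball (sh w0) r \<subseteq> cball w0 \<delta>" using h_in rB by blast
    have sc: "continuous_on (cball w0 \<delta>) (she \<epsilon>)" using she_cont eps e0 by simp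
    have "continuous_on (cball (sh w0) r) (she \<epsilon> \<circ> h)"
      by (rule continuous_on_compose[OF hc continuous_on_subset[OF sc sub]])
    hence c: "continuous_on (cball (sh w0) r) \<phi>"
      unfolding \<phi>_def by (auto simp: o_def intro!: continuous_intros)
    have m: "\<phi> \<in> cball (sh w0) r \<rightarrow> cball (sh w0) r"
    proof
      fix z assume z: "z \<in> cball (sh w0) r"
      hence zB: "z \<in> sh ` cball w0 \<delta>" using rB by blast
      have "dist (she \<epsilon> (h z)) z < r/2"
        using close[of \<epsilon> "h z"] eps e0 h_in[OF zB] sh_h[OF zB] by simp
      moreover have "dist (sh w0) y \<le> r/2" using y by simp
      moreover have "dist (sh w0) (\<phi> z) = norm ((sh w0 - y) + (she \<epsilon> (h z) - z))"
        unfolding \<phi>_def dist_norm by (simp add: algebra_simps)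
      moreover have "norm ((sh w0 - y) + (she \<epsilon> (h z) - z)) \<le> norm (sh w0 - y) + norm (she \<epsilon> (h z) - z)"
        by (rule norm_triangle_ineq)
      ultimately have "dist (sh w0) (\<phi> z) < r" by (simp add: dist_norm)
      thus "\<phi> z \<in> cball (sh w0) r" by simp
    qed
    obtain z where z: "z \<in> cball (sh w0) r" "\<phi> z = z"
      using brouwer_ball[OF rpos c m] by blast
    hence zB: "z \<in> sh ` cball w0 \<delta>" using rB by blast
    have "she \<epsilon> (h z) = y" using z(2) unfolding \<phi>_def by (simp add: algebra_simps)
    thus ?thesis using h_in[OF zB] by blast
  qed
  define P where "P = {(U, X, V::real). (U, X) \<in> W}"
  define Q where "Q = {(U, X, V::real). (U, X) \<in> ball (sh w0) (r/2)}"
  define C where "C = {(U, X, V::real). (U, X) \<in> cball (sh w0) (r/2)}"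
  have proj: "continuous_on UNIV (\<lambda>(U::real, X::real^'n, V::real). (U, X))"
    by (auto simp: case_prod_unfold intro!: continuous_intros)
  have Peq: "P = (\<lambda>(U, X, V). (U, X)) -` W" unfolding P_def by auto
  have "open P" unfolding Peq by (rule open_vimage[OF W_open proj])
  moreover have "p \<in> P" using w0W unfolding P_def p w0_def by simp
  moreover have "P \<subseteq> {(U, X, V). (U, X) \<in> W}" unfolding P_def by simp
  moreover have Qeq: "Q = (\<lambda>(U, X, V). (U, X)) -` ball (sh w0) (r/2)" unfolding Q_def by auto
  have "open Q" unfolding Qeq by (rule open_vimage[OF open_ball proj])
  moreover have "s p \<in> Q" using rpos unfolding Q_def p s_def sh_def w0_def by simp
  moreover have "Q \<subseteq> s ` {(U, X, V). (U, X) \<in> W}"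
  proof
    fix q assume "q \<in> Q"
    then obtain U Y V where q: "q = (U, Y, V)" "(U, Y) \<in> ball (sh w0) (r/2)"
      unfolding Q_def by auto
    hence "(U, Y) \<in> sh ` cball w0 \<delta>" using rB rpos by auto
    then obtain U' X where w: "(U', X) \<in> cball w0 \<delta>" "sh (U', X) = (U, Y)" by auto
    hence UU: "U' = U" "x (U, X) = Y" unfolding sh_def by auto
    have "s (U, X, V - g (U, X)) = q" unfolding s_def q UU by (simp add: UU)
    moreover have "(U, X) \<in> W" using w dW UU by auto
    ultimately show "q \<in> s ` {(U, X, V). (U, X) \<in> W}" by force
  qed
  moreover have "\<forall>\<epsilon>. 0 < \<epsilon> \<and> \<epsilon> \<le> e0 \<longrightarrow> closure Q \<subseteq> t \<epsilon> ` P"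
  proof (intro allI impI)
    fix \<epsilon> assume eps: "0 < \<epsilon> \<and> \<epsilon> \<le> e0"
    have Ceq: "C = (\<lambda>(U, X, V). (U, X)) -` cball (sh w0) (r/2)" unfolding C_def by auto
    have "closed C" unfolding Ceq by (rule closed_vimage[OF closed_cball proj])
    moreover have "Q \<subseteq> C" unfolding Q_def C_def by auto
    ultimately have "closure Q \<subseteq> C" by (rule closure_minimal[rotated])
    moreover have "C \<subseteq> t \<epsilon> ` P"
    proof
      fix q assume "q \<in> C"
      then obtain U Y V where q: "q = (U, Y, V)" "(U, Y) \<in> cball (sh w0) (r/2)"
        unfolding C_def by auto
      then obtain w where w: "w \<in> cball w0 \<delta>" "she \<epsilon> w = (U, Y)"
        using surj[of \<epsilon> "(U, Y)"] eps by blast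
      obtain U' X where wd: "w = (U', X)" by (cases w)
      hence UU: "U' = U" "xe \<epsilon> (U, X) = Y" using w unfolding she_def by auto
      have "t \<epsilon> (U, X, V - ge \<epsilon> (U, X) - he \<epsilon> (U, X)) = q" unfolding t_def q by (simp add: UU)
      moreover have "(U, X) \<in> W" using w dW UU wd by auto
      ultimately show "q \<in> t \<epsilon> ` P" unfolding P_def by force
    qed
    ultimately show "closure Q \<subseteq> t \<epsilon> ` P" by blast
  qed
  ultimately show "\<exists>P Q \<epsilon>0. open P \<and> p \<in> P \<and> P \<subseteq> {(U, X, V). (U, X) \<in> W} \<and>
                    open Q \<and> s p \<in> Q \<and> Q \<subseteq> s ` {(U, X, V). (U, X) \<in> W} \<and>
                    0 < \<epsilon>0 \<and> \<epsilon>0 \<le> 1 \<and>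
                    (\<forall>\<epsilon>. 0 < \<epsilon> \<and> \<epsilon> \<le> \<epsilon>0 \<longrightarrow> closure Q \<subseteq> t \<epsilon> ` P)"
    using e0 by blast
qed

end
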